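(* Let $\varphi(s,v)=\vec c(s)+v\vec q(s)$ be a developable timelike ruled surface of type $M^1_+$ in $\mathbb{R}^3_1$, and let $R$ be a nonzero constant. A developable spacelike ruled surface $\varphi^*$ of type $M^2_+$ with striction curve $\vec c^*=\vec c+R\vec a$ is a Mannheim offset of $\varphi$ if and only if $$\frac{d\kappa}{ds}=-\frac{1}{R}\left(R^2\kappa^2\left(\frac{ds_1}{ds}\right)^2+1\right)-\frac{1}{ds_1/ds}\frac{d^2s_1}{ds^2}\kappa .$$
   Context: Work in Minkowski 3-space $\mathbb{R}^3_1$ with $\langle x,y\rangle=-x_1y_1+x_2y_2+x_3y_3$, $\|x\|=\sqrt{|\langle x,x\rangle|}$, and Lorentzian cross product $x\times y=(x_2y_3-x_3y_2,\,x_1y_3-x_3y_1,\,x_2y_1-x_1y_2)$. A ruled surface is $\varphi(s,v)=\vec c(s)+v\vec q(s)$ with $\vec q$ a unit non-null vector field, $d\vec q/ds$ non-null, $\vec c$ the striction curve ($\langle d\vec q/ds,d\vec c/ds\rangle=0$) and $s$ the arc length of $\vec c$. Its Frenet frame $\{\vec q,\vec h,\vec a\}$ has central normal $\vec h=\frac{d\vec q/ds}{\|d\vec q/ds\|}$ and asymptotic normal $\vec a=\frac{(d\vec q/ds)\times\vec q}{\|d\vec q/ds\|}$. Type $M^1_+$: $\vec q$ and $\vec h$ spacelike (a timelike surface); type $M^2_+$: $\vec h$ timelike, $\vec q$ and $d\vec q/ds$ spacelike (a spacelike surface). Let $s_1$ be the arc length of the spherical image of $\vec q$ and $\kappa$ the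 conical curvature of the directing cone; for type $M^1_+$: $d\vec q/ds_1=\vec h$, $d\vec h/ds_1=-\vec q+\kappa\vec a$, $d\vec a/ds_1=\kappa\vec h$. A ruled surface is developable iff its distribution parameter $\det(d\vec c/ds,\vec q,d\vec q/ds)/\langle d\vec q/ds,d\vec q/ds\rangle$ vanishes identically. A ruled surface $\varphi^*(s,v)=\vec c^*(s)+v\vec q^*(s)$ with striction curve $\vec c^*$ and Frenet frame $\{\vec q^*,\vec h^*,\vec a^*\}$ is a Mannheim offset of $\varphi$ if its rulings correspond one-to-one with those of $\varphi$ and $\vec h^*=\vec a$. *)

theory Defs
  imports "HOL-Analysis.Analysis"
begin

definition lor_inner :: "real^3 \<Rightarrow> real^3 \<Rightarrow> real" where
  "lor_inner x y = - (x$1 * y$1) + x$2 * y$2 + x$3 * y$3"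

definition lor_norm :: "real^3 \<Rightarrow> real" where
  "lor_norm x = sqrt \<bar>lor_inner x x\<bar>"

definition lor_cross :: "real^3 \<Rightarrow> real^3 \<Rightarrow> real^3" where
  "lor_cross x y = vector [x$2 * y$3 - x$3 * y$2, x$1 * y$3 - x$3 * y$1, x$2 * y$1 - x$1 * y$2]"

definition spacelike :: "real^3 \<Rightarrow> bool" where
  "spacelike x \<longleftrightarrow> lor_inner x x > 0"

definition timelike :: "real^3 \<Rightarrow> bool" where
  "timelike x \<longleftrightarrow> lor_inner x x < 0"

abbreviation D :: "(real \<Rightarrow> real^3) \<Rightarrow> real \<Rightarrow> real^3" where
  "D f s \<equiv> vector_derivative f (at s)"

text \<open>Ruled surface phi(s,v) = c(s) + v q(s) over the open parameter set I, with
  q a unit non-null vector field, dq/ds non-null and c the striction curve.\<close>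
definition ruled_surface :: "real set \<Rightarrow> (real \<Rightarrow> real^3) \<Rightarrow> (real \<Rightarrow> real^3) \<Rightarrow> bool" where
  "ruled_surface I c q \<longleftrightarrow> (\<forall>s\<in>I.
      c differentiable (at s) \<and> q differentiable (at s) \<and>
      \<bar>lor_inner (q s) (q s)\<bar> = 1 \<and>
      lor_inner (D q s) (D q s) \<noteq> 0 \<and>
      lor_inner (D q s) (D c s) = 0)"

definition central_normal :: "(real \<Rightarrow> real^3) \<Rightarrow> real \<Rightarrow> real^3" where
  "central_normal q s = (1 / lor_norm (D q s)) *\<^sub>R D q s"

definition asymptotic_normal :: "(real \<Rightarrow> real^3) \<Rightarrow> real \<Rightarrow> real^3" where
  "asymptotic_normal q s = (1 / lor_norm (D q s)) *\<^sub>R lor_cross (D q s) (q s)"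

definition distribution_parameter :: "(real \<Rightarrow> real^3) \<Rightarrow> (real \<Rightarrow> real^3) \<Rightarrow> real \<Rightarrow> real" where
  "distribution_parameter c q s =
     det (vector [D c s, q s, D q s] :: real^3^3) / lor_inner (D q s) (D q s)"

definition developable :: "real set \<Rightarrow> (real \<Rightarrow> real^3) \<Rightarrow> (real \<Rightarrow> real^3) \<Rightarrow> bool" where
  "developable I c q \<longleftrightarrow> (\<forall>s\<in>I. distribution_parameter c q s = 0)"

definition type_M1_plus :: "real set \<Rightarrow> (real \<Rightarrow> real^3) \<Rightarrow> bool" where
  "type_M1_plus I q \<longleftrightarrow> (\<forall>s\<in>I. spacelike (q s) \<and> spacelike (central_normal q s))"

definition type_M2_plus :: "real set \<Rightarrow> (real \<Rightarrow> real^3) \<Rightarrow> bool" where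
  "type_M2_plus I q \<longleftrightarrow> (\<forall>s\<in>I. spacelike (q s) \<and> timelike (central_normal q s))"

text \<open>Mannheim offset: rulings correspond via the common parameter s, and h* = a.\<close>
definition mannheim_offset :: "real set \<Rightarrow> (real \<Rightarrow> real^3) \<Rightarrow> (real \<Rightarrow> real^3) \<Rightarrow> bool" where
  "mannheim_offset I q qs \<longleftrightarrow> (\<forall>s\<in>I. central_normal qs s = asymptotic_normal q s)"

end

theory Submission
  imports Defs
begin

lemma li_simps[simp]:
  "lor_inner (x + y) z = lor_inner x z + lor_inner y z"
  "lor_inner z (x + y) = lor_inner z x + lor_inner z y"
  "lor_inner (x - y) z = lor_inner x z - lor_inner y z"
  "lor_inner z (x - y) = lor_inner z x - lor_inner z y"
  "lor_inner (- x) z = - lor_inner x z"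
  "lor_inner z (- x) = - lor_inner z x"
  "lor_inner (r *\<^sub>R x) z = r * lor_inner x z"
  "lor_inner z (r *\<^sub>R x) = r * lor_inner z x"
  "lor_inner 0 z = 0" "lor_inner z 0 = 0"
  by (simp_all add: lor_inner_def algebra_simps)

lemma li_comm: "lor_inner x y = lor_inner y x"
  by (simp add: lor_inner_def algebra_simps)

lemma lc_comps: "lor_cross x y $ 1 = x$2 * y$3 - x$3 * y$2"
  "lor_cross x y $ 2 = x$1 * y$3 - x$3 * y$1"
  "lor_cross x y $ 3 = x$2 * y$1 - x$1 * y$2"
  by (simp_all add: lor_cross_def vector_def)

lemma lc_scaleR_left: "lor_cross (r *\<^sub>R x) y = r *\<^sub>R lor_cross x y"
  by (simp add: vec_eq_iff forall_3 lc_comps algebra_simps)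

lemma lc_lin: "lor_cross (a *\<^sub>R x + b *\<^sub>R y) (c *\<^sub>R x + d *\<^sub>R y) = (a*d - b*c) *\<^sub>R lor_cross x y"
  by (simp add: vec_eq_iff forall_3 lc_comps algebra_simps)

lemma lc_orth: "lor_inner (lor_cross x y) x = 0" "lor_inner (lor_cross x y) y = 0"
  by (simp_all add: lor_inner_def lc_comps algebra_simps)

lemma lc_binet: "lor_inner (lor_cross x y) (lor_cross z t) =
   - (lor_inner x z * lor_inner y t - lor_inner x t * lor_inner y z)"
  by (simp add: lor_inner_def lc_comps algebra_simps)

lemma det_lor: "det (vector [x, y, z] :: real^3^3) = - lor_inner z (lor_cross x y)"
  by (simp add: det_3 vector_def lor_inner_def lc_comps algebra_simps)

lemma gram: "(lor_inner z (lor_cross x y))^2 = - (lor_inner x x * lor_inner y y * lor_inner z z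
   + 2 * lor_inner x y * lor_inner y z * lor_inner x z - lor_inner x x * (lor_inner y z)^2
   - lor_inner y y * (lor_inner x z)^2 - lor_inner z z * (lor_inner x y)^2)"
  by (simp add: lor_inner_def lc_comps algebra_simps power2_eq_square)

lemma li_deriv:
  assumes "(f has_vector_derivative f') (at x)" "(g has_vector_derivative g') (at x)"
  shows "((\<lambda>t. lor_inner (f t) (g t)) has_real_derivative (lor_inner f' (g x) + lor_inner (f x) g')) (at x)"
proof -
  have c: "((\<lambda>t. h t $ i) has_real_derivative h' $ i) (at x)" if "(h has_vector_derivative h') (at x)" for h h' and i :: 3
    using bounded_linear.has_vector_derivative[OF bounded_linear_vec_nth that]
    by (simp add: has_real_derivative_iff_has_vector_derivative)
  note cf = c[OF assms(1)] and cg = c[OF assms(2)]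
  show ?thesis unfolding lor_inner_def
    by (rule derivative_eq_intros cf cg refl | simp add: algebra_simps)+
qed

lemma fin:
  fixes R \<sigma> a b k :: real
  assumes "R \<noteq> 0" "\<sigma> > 0" "R * (a * k + \<sigma> * b) + (R * (\<sigma> * k)) * (R * (\<sigma> * k)) * \<sigma> + \<sigma> = 0"
  shows "b = - (1 / R) * (R^2 * k^2 * \<sigma>^2 + 1) - (1 / \<sigma>) * a * k"
proof -
  have "R * \<sigma> * b = - \<sigma> * (R^2 * k^2 * \<sigma>^2 + 1) - R * a * k"
    using assms(3) by (simp add: algebra_simps power2_eq_square)
  then show ?thesis using assms(1,2) by (simp add: field_simps)
qed

lemma fin2:
  fixes R \<sigma> a b k :: real
  assumes "R \<noteq> 0" "\<sigma> > 0" "b = - (1 / R) * (R^2 * k^2 * \<sigma>^2 + 1) - (1 / \<sigma>) * a * k"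
  shows "R * (a * k + \<sigma> * b) = - \<sigma> * (1 + (R * (\<sigma> * k))^2)"
  using assms by (simp add: field_simps power2_eq_square)

lemma frame:
  fixes c q :: "real \<Rightarrow> real^3" and s1 \<kappa> :: "real \<Rightarrow> real"
    and I :: "real set"
  assumes ruled: "ruled_surface I c q"
    and M1: "type_M1_plus I q"
    and s1_arclength: "\<forall>s\<in>I. (s1 has_real_derivative lor_norm (D q s)) (at s)"
    and orient: "\<forall>s\<in>I. D c s = q s"
    and sI: "s \<in> I"
  shows "deriv s1 s = lor_norm (D q s)" "deriv s1 s > 0"
    "D q s = deriv s1 s *\<^sub>R central_normal q s"
    "lor_inner (q s) (q s) = 1" "lor_inner (central_normal q s) (central_normal q s) = 1"
    "lor_inner (q s) (central_normal q s) = 0" "lor_inner (central_normal q s) (q s) = 0"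
    "asymptotic_normal q s = lor_cross (central_normal q s) (q s)"
    "lor_inner (asymptotic_normal q s) (q s) = 0" "lor_inner (q s) (asymptotic_normal q s) = 0"
    "lor_inner (asymptotic_normal q s) (central_normal q s) = 0"
    "lor_inner (central_normal q s) (asymptotic_normal q s) = 0"
    "lor_inner (asymptotic_normal q s) (asymptotic_normal q s) = -1"
    "(q has_vector_derivative deriv s1 s *\<^sub>R central_normal q s) (at s)"
    "(c has_vector_derivative q s) (at s)"
proof -
  have r: "c differentiable (at s)" "q differentiable (at s)" "\<bar>lor_inner (q s) (q s)\<bar> = 1"
    "lor_inner (D q s) (D q s) \<noteq> 0" "lor_inner (D q s) (D c s) = 0"
    using ruled sI unfolding ruled_surface_def by auto
  have sp: "spacelike (q s)" "spacelike (central_normal q s)" using M1 sI unfolding type_M1_plus_def by auto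
  show d1: "deriv s1 s = lor_norm (D q s)" using s1_arclength sI DERIV_imp_deriv by blast
  define n where "n = lor_norm (D q s)"
  have n2: "n^2 = \<bar>lor_inner (D q s) (D q s)\<bar>" unfolding n_def lor_norm_def by simp
  have npos: "n > 0" unfolding n_def lor_norm_def using r(4) by simp
  show "deriv s1 s > 0" using d1 npos n_def by simp
  have hdef: "central_normal q s = (1/n) *\<^sub>R D q s" unfolding central_normal_def n_def ..
  show dq: "D q s = deriv s1 s *\<^sub>R central_normal q s" using npos by (simp add: hdef d1 n_def[symmetric])
  show qq: "lor_inner (q s) (q s) = 1" using r(3) sp(1) unfolding spacelike_def by simp
  have "lor_inner (central_normal q s) (central_normal q s) = lor_inner (D q s) (D q s) / n^2"
    by (simp add: hdef power2_eq_square)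
  moreover have "lor_inner (D q s) (D q s) > 0" using sp(2) calculation npos
    by (simp add: spacelike_def zero_less_divide_iff)
  ultimately show hh: "lor_inner (central_normal q s) (central_normal q s) = 1" using n2 npos by simp
  have "lor_inner (D q s) (q s) = 0" using r(5) orient sI by simp
  then show qh: "lor_inner (q s) (central_normal q s) = 0" "lor_inner (central_normal q s) (q s) = 0"
    by (simp_all add: hdef li_comm)
  show an: "asymptotic_normal q s = lor_cross (central_normal q s) (q s)"
    unfolding asymptotic_normal_def using npos by (simp add: hdef lc_scaleR_left n_def[symmetric])
  show "lor_inner (asymptotic_normal q s) (q s) = 0" "lor_inner (q s) (asymptotic_normal q s) = 0"
    "lor_inner (asymptotic_normal q s) (central_normal q s) = 0"
    "lor_inner (central_normal q s) (asymptotic_normal q s) = 0"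
    by (simp_all add: an lc_orth li_comm[of _ "lor_cross _ _"])
  show "lor_inner (asymptotic_normal q s) (asymptotic_normal q s) = -1"
    by (simp add: an lc_binet qq hh qh)
  show "(q has_vector_derivative deriv s1 s *\<^sub>R central_normal q s) (at s)"
    using r(2) dq vector_derivative_works by metis
  show "(c has_vector_derivative q s) (at s)"
    using r(1) orient sI vector_derivative_works by metis
qed

theorem theorem6p2:
  fixes c q :: "real \<Rightarrow> real^3" and s1 \<kappa> :: "real \<Rightarrow> real"
    and I :: "real set" and R :: real
  assumes I_open: "open I"
    and ruled: "ruled_surface I c q"
    and arclength: "\<forall>s\<in>I. lor_norm (D c s) = 1"
    and M1: "type_M1_plus I q"
    and dev: "developable I c q"
    and s1_arclength: "\<forall>s\<in>I. (s1 has_real_derivative lor_norm (D q s)) (at s)"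
    and frenet_h: "\<forall>s\<in>I. (central_normal q has_vector_derivative
          deriv s1 s *\<^sub>R (- q s + \<kappa> s *\<^sub>R asymptotic_normal q s)) (at s)"
    and frenet_a: "\<forall>s\<in>I. (asymptotic_normal q has_vector_derivative
          (deriv s1 s * \<kappa> s) *\<^sub>R central_normal q s) (at s)"
    and \<kappa>_diff: "\<forall>s\<in>I. \<kappa> differentiable (at s)"
    and s1'_diff: "\<forall>s\<in>I. deriv s1 differentiable (at s)"
    and R_nz: "R \<noteq> 0"
    and orient: "\<forall>s\<in>I. D c s = q s"
    and \<kappa>_nz: "\<forall>s\<in>I. \<kappa> s \<noteq> 0"
  shows "(\<exists>qs :: real \<Rightarrow> real^3.
            ruled_surface I (\<lambda>s. c s + R *\<^sub>R asymptotic_normal q s) qs \<and>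
            type_M2_plus I qs \<and>
            developable I (\<lambda>s. c s + R *\<^sub>R asymptotic_normal q s) qs \<and>
            mannheim_offset I q qs)
         \<longleftrightarrow>
         (\<forall>s\<in>I. deriv \<kappa> s =
            - (1 / R) * (R^2 * (\<kappa> s)^2 * (deriv s1 s)^2 + 1)
            - (1 / deriv s1 s) * deriv (deriv s1) s * \<kappa> s)"
proof -
  define \<sigma> where "\<sigma> = deriv s1"
  define h where "h = central_normal q"
  define a where "a = asymptotic_normal q"
  define f where "f = (\<lambda>t. R * (\<sigma> t * \<kappa> t))"
  note fr = frame[OF ruled M1 s1_arclength orient]
  have dh: "(h has_vector_derivative \<sigma> s *\<^sub>R (- q s + \<kappa> s *\<^sub>R a s)) (at s)" if "s \<in> I" for s
    using frenet_h that unfolding h_def a_def \<sigma>_def by blast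
  have da: "(a has_vector_derivative (\<sigma> s * \<kappa> s) *\<^sub>R h s) (at s)" if "s \<in> I" for s
    using frenet_a that unfolding h_def a_def \<sigma>_def by blast
  have df: "(f has_real_derivative R * (deriv \<sigma> s * \<kappa> s + \<sigma> s * deriv \<kappa> s)) (at s)" if "s \<in> I" for s
  proof -
    have "(\<sigma> has_real_derivative deriv \<sigma> s) (at s)" "(\<kappa> has_real_derivative deriv \<kappa> s) (at s)"
      using s1'_diff \<kappa>_diff that DERIV_deriv_iff_real_differentiable unfolding \<sigma>_def by blast+
    then show ?thesis unfolding f_def
      by (auto intro!: derivative_eq_intros simp: algebra_simps)
  qed
  have dcs: "((\<lambda>t. c t + R *\<^sub>R a t) has_vector_derivative q s + f s *\<^sub>R h s) (at s)" if "s \<in> I" for s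
    using fr(15)[OF that] da[OF that]
    by (auto intro!: derivative_eq_intros simp: f_def algebra_simps)
  have Dcs: "D (\<lambda>t. c t + R *\<^sub>R a t) s = q s + f s *\<^sub>R h s" if "s \<in> I" for s
    using dcs[OF that] vector_derivative_at by blast
  show ?thesis
    unfolding a_def[symmetric]
  proof
    assume "\<exists>qs. ruled_surface I (\<lambda>s. c s + R *\<^sub>R a s) qs \<and> type_M2_plus I qs \<and>
         developable I (\<lambda>s. c s + R *\<^sub>R a s) qs \<and> mannheim_offset I q qs"
    then obtain qs where qr: "ruled_surface I (\<lambda>s. c s + R *\<^sub>R a s) qs" and qM: "type_M2_plus I qs"
      and qd: "developable I (\<lambda>s. c s + R *\<^sub>R a s) qs" and qm: "mannheim_offset I q qs" by blast
    show "\<forall>s\<in>I. deriv \<kappa> s = - (1 / R) * (R^2 * (\<kappa> s)^2 * (deriv s1 s)^2 + 1)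
            - (1 / deriv s1 s) * deriv (deriv s1) s * \<kappa> s"
    proof
      fix s assume sI: "s \<in> I"
      define u where "u = (\<lambda>t. lor_inner (qs t) (q t))"
      define w where "w = (\<lambda>t. lor_inner (qs t) (h t))"
      have rq: "qs differentiable (at t)" "\<bar>lor_inner (qs t) (qs t)\<bar> = 1"
        "lor_inner (D qs t) (D qs t) \<noteq> 0" if "t \<in> I" for t
        using qr that unfolding ruled_surface_def by auto
      have qq1: "lor_inner (qs t) (qs t) = 1" if "t \<in> I" for t
        using rq(2)[OF that] qM that unfolding type_M2_plus_def spacelike_def by auto
      have dqs: "(qs has_vector_derivative D qs t) (at t)" if "t \<in> I" for t
        using rq(1)[OF that] vector_derivative_works by blast
      define L where "L = (\<lambda>t. lor_norm (D qs t))"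
      have Lpos: "L t > 0" if "t \<in> I" for t using rq(3)[OF that] unfolding L_def lor_norm_def by simp
      have Dqs: "D qs t = L t *\<^sub>R a t" if "t \<in> I" for t
      proof -
        have "a t = (1 / L t) *\<^sub>R D qs t" using qm that
          unfolding mannheim_offset_def central_normal_def a_def L_def by auto
        then show ?thesis using Lpos[OF that] by simp
      qed
      note F = fr[OF sI, folded \<sigma>_def h_def a_def]
      have "((\<lambda>t. lor_inner (qs t) (qs t)) has_real_derivative
          lor_inner (D qs s) (qs s) + lor_inner (qs s) (D qs s)) (at s)"
        by (rule li_deriv[OF dqs[OF sI] dqs[OF sI]])
      moreover have "((\<lambda>t. lor_inner (qs t) (qs t)) has_real_derivative 0) (at s)"
        by (rule has_field_derivative_transform_within_open[of "\<lambda>t. 1" 0 s I]) (use I_open sI qq1 in auto)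
      ultimately have "lor_inner (D qs s) (qs s) + lor_inner (qs s) (D qs s) = 0"
        using DERIV_unique by blast
      then have qa: "lor_inner (qs s) (a s) = 0"
        using Lpos[OF sI] by (simp add: Dqs[OF sI] li_comm[of "a s" "qs s"])
      have du: "(u has_real_derivative \<sigma> s * w s) (at s)"
        using li_deriv[OF dqs[OF sI] F(14)] unfolding u_def w_def
        by (simp add: Dqs[OF sI] F(4-7,9-13))
      have dw: "(w has_real_derivative - (\<sigma> s * u s)) (at s)"
        using li_deriv[OF dqs[OF sI] dh[OF sI]] unfolding u_def w_def
        by (simp add: Dqs[OF sI] F(4-7,9-13) qa)
      have wfu: "w t = f t * u t" if tI: "t \<in> I" for t
      proof -
        note G = fr[OF tI, folded \<sigma>_def h_def a_def]
        have "distribution_parameter (\<lambda>s. c s + R *\<^sub>R a s) qs t = 0"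
          using qd tI unfolding developable_def by auto
        then have "det (vector [q t + f t *\<^sub>R h t, qs t, D qs t] :: real^3^3) = 0"
          using rq(3)[OF tI] by (simp add: distribution_parameter_def Dcs[OF tI])
        then have "L t * lor_inner (lor_cross (h t) (q t)) (lor_cross (q t + f t *\<^sub>R h t) (qs t)) = 0"
          by (simp add: det_lor Dqs[OF tI] G(8))
        then have "lor_inner (lor_cross (h t) (q t)) (lor_cross (q t + f t *\<^sub>R h t) (qs t)) = 0"
          using Lpos[OF tI] by simp
        moreover have "lor_inner (h t) (qs t) = w t" "lor_inner (q t) (qs t) = u t"
          unfolding u_def w_def by (simp_all add: li_comm)
        ultimately show ?thesis
          by (simp add: lc_binet G(4-7,9-13))
      qed
      have "(lor_inner (qs s) (lor_cross (h s) (q s)))^2 = 0" using qa F(8) by simp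
      moreover have "lor_inner (h s) (qs s) = w s" "lor_inner (q s) (qs s) = u s"
        unfolding u_def w_def by (simp_all add: li_comm)
      ultimately have uw: "(u s)^2 + (w s)^2 = 1"
        unfolding gram using F(4-7,9-13) qq1[OF sI]
        by (simp add: algebra_simps)
      have u0: "u s \<noteq> 0" using uw wfu[OF sI] by auto
      have "((\<lambda>t. f t * u t) has_real_derivative
          R * (deriv \<sigma> s * \<kappa> s + \<sigma> s * deriv \<kappa> s) * u s + f s * (\<sigma> s * w s)) (at s)"
        using df[OF sI] du by (auto intro!: derivative_eq_intros)
      then have "(w has_real_derivative
          R * (deriv \<sigma> s * \<kappa> s + \<sigma> s * deriv \<kappa> s) * u s + f s * (\<sigma> s * w s)) (at s)"
        by (rule has_field_derivative_transform_within_open[OF _ I_open sI]) (use wfu in auto)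
      with dw have "R * (deriv \<sigma> s * \<kappa> s + \<sigma> s * deriv \<kappa> s) * u s + f s * (\<sigma> s * w s) = - (\<sigma> s * u s)"
        using DERIV_unique by blast
      then have "(R * (deriv \<sigma> s * \<kappa> s + \<sigma> s * deriv \<kappa> s) + f s * f s * \<sigma> s + \<sigma> s) * u s = 0"
        by (simp add: wfu[OF sI] algebra_simps)
      then have E: "R * (deriv \<sigma> s * \<kappa> s + \<sigma> s * deriv \<kappa> s) + f s * f s * \<sigma> s + \<sigma> s = 0"
        using u0 by simp
      have sp: "\<sigma> s > 0" using F(2) by simp
      show "deriv \<kappa> s = - (1 / R) * (R^2 * (\<kappa> s)^2 * (deriv s1 s)^2 + 1)
            - (1 / deriv s1 s) * deriv (deriv s1) s * \<kappa> s"
        using fin[OF R_nz sp E[unfolded f_def]] unfolding \<sigma>_def .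
    qed
  next
    assume ode: "\<forall>s\<in>I. deriv \<kappa> s = - (1 / R) * (R^2 * (\<kappa> s)^2 * (deriv s1 s)^2 + 1)
            - (1 / deriv s1 s) * deriv (deriv s1) s * \<kappa> s"
    define sg where "sg = sgn R"
    define rr where "rr = (\<lambda>t. sqrt (1 + (f t)^2))"
    define u where "u = (\<lambda>t. sg / rr t)"
    define w where "w = (\<lambda>t. f t * u t)"
    define qs where "qs = (\<lambda>t. u t *\<^sub>R q t + w t *\<^sub>R h t)"
    have sg2: "sg * sg = 1" using R_nz unfolding sg_def by (cases "R > 0") auto
    have pt: "(qs has_vector_derivative (w s * \<sigma> s * \<kappa> s) *\<^sub>R a s) (at s)
      \<and> w s * \<sigma> s * \<kappa> s > 0 \<and> lor_inner (qs s) (qs s) = 1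
      \<and> lor_inner (q s + f s *\<^sub>R h s) (a s) = 0 \<and> f s * u s = w s
      \<and> lor_inner (a s) (a s) = -1" if sI: "s \<in> I" for s
    proof -
      note F = fr[OF sI, folded \<sigma>_def h_def a_def]
      have sp: "\<sigma> s > 0" using F(2) by simp
      define f' where "f' = R * (deriv \<sigma> s * \<kappa> s + \<sigma> s * deriv \<kappa> s)"
      have f'e: "f' = - \<sigma> s * (1 + (f s)^2)"
        using fin2[OF R_nz sp, of "deriv \<kappa> s" "\<kappa> s" "deriv \<sigma> s"] ode sI
        unfolding f'_def f_def \<sigma>_def by simp
      have rpos: "rr s > 0" unfolding rr_def by (simp add: add_pos_nonneg)
      have rr2: "(rr s)^2 = 1 + (f s)^2" unfolding rr_def by (simp add: add_pos_nonneg)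
      have fp: "0 < 1 + (f s)^2" by (smt (verit) zero_le_power2)
      have d1: "((\<lambda>t. 1 + (f t)^2) has_real_derivative 2 * f s * f') (at s)"
        using df[OF sI, folded f'_def] by (auto intro!: derivative_eq_intros)
      have drr: "(rr has_real_derivative (f s * f') / rr s) (at s)"
        using DERIV_chain2[OF DERIV_real_sqrt[OF fp] d1] unfolding rr_def
        by (simp add: divide_simps)
      have "(u has_real_derivative - (sg * ((f s * f') / rr s)) / (rr s * rr s)) (at s)"
        using drr rpos unfolding u_def by (auto intro!: derivative_eq_intros)
      moreover have "- (sg * ((f s * f') / rr s)) / (rr s * rr s) = \<sigma> s * w s"
      proof -
        have "- (sg * ((f s * f') / rr s)) / (rr s * rr s) = sg * f s * \<sigma> s * (rr s)^2 / (rr s)^3"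
          unfolding f'e rr2[symmetric] by (simp add: power2_eq_square power3_eq_cube field_simps)
        also have "\<dots> = sg * f s * \<sigma> s / rr s" using rpos by (simp add: power2_eq_square power3_eq_cube field_simps)
        finally show ?thesis unfolding w_def u_def by simp
      qed
      ultimately have du: "(u has_real_derivative \<sigma> s * w s) (at s)" by simp
      have dw: "(w has_real_derivative - \<sigma> s * u s) (at s)"
      proof -
        have "(w has_real_derivative f' * u s + f s * (\<sigma> s * w s)) (at s)"
          using df[OF sI, folded f'_def] du unfolding w_def by (auto intro!: derivative_eq_intros)
        moreover have "f' * u s + f s * (\<sigma> s * w s) = - \<sigma> s * u s"
          unfolding f'e w_def by (simp add: algebra_simps power2_eq_square)
        ultimately show ?thesis by simp
      qed
      have "(qs has_vector_derivative
          (u s *\<^sub>R (\<sigma> s *\<^sub>R h s) + (\<sigma> s * w s) *\<^sub>R q s) +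
          (w s *\<^sub>R (\<sigma> s *\<^sub>R (- q s + \<kappa> s *\<^sub>R a s)) + (- \<sigma> s * u s) *\<^sub>R h s)) (at s)"
        unfolding qs_def
        by (intro derivative_intros du dw F(14) dh[OF sI])
      moreover have "u s *\<^sub>R (\<sigma> s *\<^sub>R h s) + (\<sigma> s * w s) *\<^sub>R q s +
          (w s *\<^sub>R (\<sigma> s *\<^sub>R (- q s + \<kappa> s *\<^sub>R a s)) + (- \<sigma> s * u s) *\<^sub>R h s)
          = (w s * \<sigma> s * \<kappa> s) *\<^sub>R a s"
        by (simp add: algebra_simps)
      ultimately have dqs: "(qs has_vector_derivative (w s * \<sigma> s * \<kappa> s) *\<^sub>R a s) (at s)" by simp
      have "w s * \<sigma> s * \<kappa> s = (sg * R) * (\<sigma> s * \<kappa> s)^2 / rr s"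
        unfolding w_def u_def f_def by (simp add: power2_eq_square)
      moreover have "sg * R > 0" unfolding sg_def using R_nz by (cases "R > 0") auto
      moreover have "(\<sigma> s * \<kappa> s)^2 > 0" using sp \<kappa>_nz sI by simp
      ultimately have Kpos: "w s * \<sigma> s * \<kappa> s > 0" using rpos by simp
      have "lor_inner (qs s) (qs s) = (u s)^2 + (w s)^2"
        unfolding qs_def by (simp add: F(4-7) power2_eq_square)
      also have "\<dots> = (sg * sg) * (1 + (f s)^2) / (rr s)^2"
        unfolding w_def u_def by (simp add: power2_eq_square add_divide_distrib algebra_simps)
      also have "\<dots> = 1" using sg2 rr2 rpos fp by simp
      finally have qq: "lor_inner (qs s) (qs s) = 1" .
      show ?thesis using dqs Kpos qq F(8-13) by (simp add: w_def)
    qed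
    have Dqs: "D qs s = (w s * \<sigma> s * \<kappa> s) *\<^sub>R a s" if "s \<in> I" for s
      using pt[OF that] vector_derivative_at by blast
    have cn: "central_normal qs s = a s" if "s \<in> I" for s
    proof -
      define K where "K = w s * \<sigma> s * \<kappa> s"
      have K: "K > 0" "lor_inner (a s) (a s) = -1" using pt[OF that] unfolding K_def by auto
      have "lor_inner (D qs s) (D qs s) = - (K^2)"
        unfolding Dqs[OF that] K_def[symmetric] using K by (simp add: power2_eq_square)
      then have "lor_norm (D qs s) = K" unfolding lor_norm_def using K by simp
      then show ?thesis unfolding central_normal_def using K
        by (simp add: Dqs[OF that] K_def[symmetric])
    qed
    show "\<exists>qs. ruled_surface I (\<lambda>s. c s + R *\<^sub>R a s) qs \<and> type_M2_plus I qs \<and>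
         developable I (\<lambda>s. c s + R *\<^sub>R a s) qs \<and> mannheim_offset I q qs"
    proof (intro exI[of _ qs] conjI)
      show "ruled_surface I (\<lambda>s. c s + R *\<^sub>R a s) qs"
        unfolding ruled_surface_def
      proof (intro ballI conjI)
        fix s assume sI: "s \<in> I"
        show "(\<lambda>s. c s + R *\<^sub>R a s) differentiable (at s)" using dcs[OF sI]
          using differentiableI_vector by blast
        show "qs differentiable (at s)" using pt[OF sI] differentiableI_vector by blast
        show "\<bar>lor_inner (qs s) (qs s)\<bar> = 1" using pt[OF sI] by simp
        have "w s * \<sigma> s * \<kappa> s \<noteq> 0" using pt[OF sI] by (metis order_less_irrefl)
        then show "lor_inner (D qs s) (D qs s) \<noteq> 0" using pt[OF sI] by (simp add: Dqs[OF sI])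
        show "lor_inner (D qs s) (D (\<lambda>s. c s + R *\<^sub>R a s) s) = 0"
          using fr(9,11)[OF sI, folded \<sigma>_def h_def a_def] by (simp add: Dqs[OF sI] Dcs[OF sI])
      qed
      show "type_M2_plus I qs" unfolding type_M2_plus_def spacelike_def timelike_def
        using pt cn by simp
      show "mannheim_offset I q qs" unfolding mannheim_offset_def using cn a_def by simp
      show "developable I (\<lambda>s. c s + R *\<^sub>R a s) qs"
        unfolding developable_def distribution_parameter_def
      proof
        fix s assume sI: "s \<in> I"
        have "lor_cross (q s + f s *\<^sub>R h s) (qs s) = 0"
          using lc_lin[of 1 "q s" "f s" "h s" "u s" "w s"] pt[OF sI] unfolding qs_def by simp
        then show "det (vector [D (\<lambda>s. c s + R *\<^sub>R a s) s, qs s, D qs s] :: real^3^3) /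
            lor_inner (D qs s) (D qs s) = 0"
          by (simp add: det_lor Dcs[OF sI])
      qed
    qed
  qed
qed

end
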